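(* Let $n>1$, $a\in\mathcal{T}_n$, and consider the semigroup $(\mathcal{T}_n,*_a)$. Let $x\in\mathcal{T}_n$. If $\operatorname{rank}(x)\le\operatorname{rank}(a)$ and $|\operatorname{ran}(x)\cap M|\le1$ for every block $M$ of $\rho_a$, then $$R_x=\{y\in\mathcal{T}_n : \rho_y=\rho_x \text{ and } |\operatorname{ran}(y)\cap M|\le1 \text{ for every block } M \text{ of } \rho_a\}$$ and $|R_x|>1$. Otherwise $R_x=\{x\}$.
   Context: $\mathcal{T}_n$ is the set of all maps $N\to N$, $N=\{1,\dots,n\}$. Maps are composed from left to right: $(xy)(i)=y(x(i))$. For fixed $a\in\mathcal{T}_n$, $x*_a y:=xay$; $(\mathcal{T}_n,*_a)$ is a semigroup. $\operatorname{ran}(x)$ is the image of $x$, $\operatorname{rank}(x)=|\operatorname{ran}(x)|$, and $\rho_x$ is the partition of $N$ into the nonempty fibres of $x$ ($i,j$ in the same block iff $x(i)=x(j)$). Green's relations in a semigroup $S$: with $S^1$ the semigroup $S$ with an identity adjoined, $x\mathcal{L}y$ iff $S^1x=S^1y$, $x\mathcal{R}y$ iff $xS^1=yS^1$, $\mathcal{H}=\mathcal{L}\cap\mathcal{R}$, $\mathcal{D}=\mathcal{L}\circ\mathcal{R}$ (which equals $\mathcal{R}\circ\mathcal{L}$); $L_x,R_x,H_x,D_x$ denote the classes of $x$ in $(\mathcal{T}_n,*_a)$. *)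

theory Defs
  imports "HOL-Library.FuncSet"
begin

text \<open>Full transformation monoid T_n: maps {1..n} -> {1..n}, represented
  extensionally (value undefined outside {1..n}).\<close>
definition Tn :: "nat \<Rightarrow> (nat \<Rightarrow> nat) set" where
  "Tn n = {1..n} \<rightarrow>\<^sub>E {1..n}"

text \<open>Left-to-right composition: (x y)(i) = y (x i). Sandwich product x *_a y = x a y.\<close>
definition sand :: "nat \<Rightarrow> (nat \<Rightarrow> nat) \<Rightarrow> (nat \<Rightarrow> nat) \<Rightarrow> (nat \<Rightarrow> nat) \<Rightarrow> (nat \<Rightarrow> nat)" where
  "sand n a x y = restrict (\<lambda>i. y (a (x i))) {1..n}"

definition ran :: "nat \<Rightarrow> (nat \<Rightarrow> nat) \<Rightarrow> nat set" where
  "ran n x = x ` {1..n}"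

definition rank :: "nat \<Rightarrow> (nat \<Rightarrow> nat) \<Rightarrow> nat" where
  "rank n x = card (ran n x)"

definition rho :: "nat \<Rightarrow> (nat \<Rightarrow> nat) \<Rightarrow> nat set set" where
  "rho n x = {{j \<in> {1..n}. x j = x i} | i. i \<in> {1..n}}"

text \<open>Principal right ideal x S^1 in (T_n, *_a).\<close>
definition right_ideal :: "nat \<Rightarrow> (nat \<Rightarrow> nat) \<Rightarrow> (nat \<Rightarrow> nat) \<Rightarrow> (nat \<Rightarrow> nat) set" where
  "right_ideal n a x = insert x {sand n a x z | z. z \<in> Tn n}"

definition R_class :: "nat \<Rightarrow> (nat \<Rightarrow> nat) \<Rightarrow> (nat \<Rightarrow> nat) \<Rightarrow> (nat \<Rightarrow> nat) set" where
  "R_class n a x = {y \<in> Tn n. right_ideal n a y = right_ideal n a x}"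

end

theory Submission
  imports Defs
begin

definition kle :: "nat \<Rightarrow> (nat \<Rightarrow> nat) \<Rightarrow> (nat \<Rightarrow> nat) \<Rightarrow> bool" where
  "kle n f g \<longleftrightarrow> (\<forall>i\<in>{1..n}. \<forall>j\<in>{1..n}. f i = f j \<longrightarrow> g i = g j)"

lemma Tn_val: "f \<in> Tn n \<Longrightarrow> i \<in> {1..n} \<Longrightarrow> f i \<in> {1..n}"
  unfolding Tn_def by auto

lemma Tn_out: "f \<in> Tn n \<Longrightarrow> i \<notin> {1..n} \<Longrightarrow> f i = undefined"
  unfolding Tn_def by auto

lemma sand_Tn: "a \<in> Tn n \<Longrightarrow> y \<in> Tn n \<Longrightarrow> z \<in> Tn n \<Longrightarrow> sand n a y z \<in> Tn n"
  unfolding sand_def by (auto simp: Tn_def)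

lemma memS:
  assumes a: "a \<in> Tn n" and y: "y \<in> Tn n" and w: "w \<in> Tn n"
  shows "(w \<in> {sand n a y z | z. z \<in> Tn n}) \<longleftrightarrow> kle n (\<lambda>i. a (y i)) w"
proof
  assume "w \<in> {sand n a y z | z. z \<in> Tn n}"
  then obtain z where "w = sand n a y z" by auto
  then show "kle n (\<lambda>i. a (y i)) w" unfolding kle_def sand_def by simp
next
  assume k: "kle n (\<lambda>i. a (y i)) w"
  define z where "z = restrict (\<lambda>t. if \<exists>i\<in>{1..n}. a (y i) = t
      then w (SOME i. i \<in> {1..n} \<and> a (y i) = t) else 1) {1..n}"
  have zv: "(if \<exists>i\<in>{1..n}. a (y i) = t
      then w (SOME i. i \<in> {1..n} \<and> a (y i) = t) else 1) \<in> {1..n}" if t: "t \<in> {1..n}" for t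
  proof (cases "\<exists>i\<in>{1..n}. a (y i) = t")
    case True
    then have "\<exists>j. j \<in> {1..n} \<and> a (y j) = t" by auto
    from someI_ex[OF this] have "(SOME j. j \<in> {1..n} \<and> a (y j) = t) \<in> {1..n}" by blast
    then have "w (SOME j. j \<in> {1..n} \<and> a (y j) = t) \<in> {1..n}" by (rule Tn_val[OF w])
    then show ?thesis using True by (simp only: if_True)
  next
    case False
    have "1 \<in> {1..n}" using t by auto
    then show ?thesis using False by (simp only: if_False)
  qed
  have zT: "z \<in> Tn n" unfolding z_def Tn_def
    by (rule iffD2[OF restrict_PiE_iff], intro ballI, rule zv)
  have "w = sand n a y z"
  proof
    fix i
    show "w i = sand n a y z i"
    proof (cases "i \<in> {1..n}")
      case True
      have ay: "a (y i) \<in> {1..n}" using Tn_val[OF a Tn_val[OF y True]] .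
      have ex: "\<exists>j. j \<in> {1..n} \<and> a (y j) = a (y i)" using True by auto
      define j where "j = (SOME j. j \<in> {1..n} \<and> a (y j) = a (y i))"
      have j: "j \<in> {1..n} \<and> a (y j) = a (y i)" using someI_ex[OF ex] unfolding j_def .
      have ex2: "\<exists>i'\<in>{1..n}. a (y i') = a (y i)" using True by blast
      have "z (a (y i)) = (if \<exists>i'\<in>{1..n}. a (y i') = a (y i)
        then w (SOME i'. i' \<in> {1..n} \<and> a (y i') = a (y i)) else 1)"
        unfolding z_def by (rule restrict_apply'[OF ay])
      also have "\<dots> = w j" unfolding j_def by (rule if_P[OF ex2])
      finally have "z (a (y i)) = w j" .
      also have "\<dots> = w i" using k j True unfolding kle_def by blast
      finally show ?thesis using True unfolding sand_def by simp
    next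
      case False
      then show ?thesis using Tn_out[OF w False] unfolding sand_def by (simp only: restrict_apply if_False)
    qed
  qed
  then show "w \<in> {sand n a y z | z. z \<in> Tn n}" using zT by blast
qed

lemma S_Tn: "a \<in> Tn n \<Longrightarrow> y \<in> Tn n \<Longrightarrow> {sand n a y z | z. z \<in> Tn n} \<subseteq> Tn n"
  using sand_Tn by auto

lemma R_mem:
  assumes a: "a \<in> Tn n" and x: "x \<in> Tn n"
  shows "y \<in> R_class n a x \<longleftrightarrow> y \<in> Tn n \<and> (y = x \<or> (kle n (\<lambda>i. a (y i)) x \<and> kle n (\<lambda>i. a (x i)) y))"
proof
  assume "y \<in> R_class n a x"
  then have y: "y \<in> Tn n" and eq: "right_ideal n a y = right_ideal n a x"
    unfolding R_class_def by auto
  have "x \<in> right_ideal n a y" using eq unfolding right_ideal_def by auto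
  moreover have "y \<in> right_ideal n a x" using eq unfolding right_ideal_def by auto
  ultimately show "y \<in> Tn n \<and> (y = x \<or> (kle n (\<lambda>i. a (y i)) x \<and> kle n (\<lambda>i. a (x i)) y))"
    using y memS[OF a y x] memS[OF a x y] unfolding right_ideal_def by auto
next
  assume h: "y \<in> Tn n \<and> (y = x \<or> (kle n (\<lambda>i. a (y i)) x \<and> kle n (\<lambda>i. a (x i)) y))"
  then have y: "y \<in> Tn n" by auto
  show "y \<in> R_class n a x"
  proof (cases "y = x")
    case True then show ?thesis using x unfolding R_class_def by auto
  next
    case False
    then have k1: "kle n (\<lambda>i. a (y i)) x" and k2: "kle n (\<lambda>i. a (x i)) y" using h by auto
    have s1: "{sand n a y z | z. z \<in> Tn n} \<subseteq> {sand n a x z | z. z \<in> Tn n}"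
    proof
      fix w assume w: "w \<in> {sand n a y z | z. z \<in> Tn n}"
      have wT: "w \<in> Tn n" using w S_Tn[OF a y] by auto
      have "kle n (\<lambda>i. a (y i)) w" using memS[OF a y wT] w by auto
      then have "kle n (\<lambda>i. a (x i)) w" using k2 unfolding kle_def by metis
      then show "w \<in> {sand n a x z | z. z \<in> Tn n}" using memS[OF a x wT] by auto
    qed
    have s2: "{sand n a x z | z. z \<in> Tn n} \<subseteq> {sand n a y z | z. z \<in> Tn n}"
    proof
      fix w assume w: "w \<in> {sand n a x z | z. z \<in> Tn n}"
      have wT: "w \<in> Tn n" using w S_Tn[OF a x] by auto
      have "kle n (\<lambda>i. a (x i)) w" using memS[OF a x wT] w by auto
      then have "kle n (\<lambda>i. a (y i)) w" using k1 unfolding kle_def by metis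
      then show "w \<in> {sand n a y z | z. z \<in> Tn n}" using memS[OF a y wT] by auto
    qed
    have "y \<in> {sand n a x z | z. z \<in> Tn n}" using memS[OF a x y] k2 by auto
    moreover have "x \<in> {sand n a y z | z. z \<in> Tn n}" using memS[OF a y x] k1 by auto
    ultimately have "right_ideal n a y = right_ideal n a x"
      using s1 s2 unfolding right_ideal_def by auto
    then show ?thesis using y unfolding R_class_def by auto
  qed
qed

lemma rho_eq:
  "rho n y = rho n x \<longleftrightarrow> (\<forall>i\<in>{1..n}. \<forall>j\<in>{1..n}. y i = y j \<longleftrightarrow> x i = x j)"
proof
  assume h: "\<forall>i\<in>{1..n}. \<forall>j\<in>{1..n}. y i = y j \<longleftrightarrow> x i = x j"
  have "\<And>i. i \<in> {1..n} \<Longrightarrow> {j \<in> {1..n}. y j = y i} = {j \<in> {1..n}. x j = x i}"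
    using h by auto
  then show "rho n y = rho n x" unfolding rho_def by blast
next
  assume h: "rho n y = rho n x"
  show "\<forall>i\<in>{1..n}. \<forall>j\<in>{1..n}. y i = y j \<longleftrightarrow> x i = x j"
  proof (intro ballI)
    fix i j assume i: "i \<in> {1..n}" and j: "j \<in> {1..n}"
    have "{l \<in> {1..n}. x l = x i} \<in> rho n y" using h i unfolding rho_def by auto
    then obtain k where k: "k \<in> {1..n}" and e: "{l \<in> {1..n}. x l = x i} = {l \<in> {1..n}. y l = y k}"
      unfolding rho_def by auto
    have "y i = y k" using e i by blast
    then have e2: "{l \<in> {1..n}. x l = x i} = {l \<in> {1..n}. y l = y i}" using e by simp
    show "y i = y j \<longleftrightarrow> x i = x j"
    proof
      assume "y i = y j" then have "j \<in> {l \<in> {1..n}. y l = y i}" using j by auto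
      then show "x i = x j" using e2 by (metis (mono_tags, lifting) mem_Collect_eq)
    next
      assume "x i = x j" then have "j \<in> {l \<in> {1..n}. x l = x i}" using j by auto
      then show "y i = y j" using e2 by (metis (mono_tags, lifting) mem_Collect_eq)
    qed
  qed
qed

lemma block_cond:
  assumes a: "a \<in> Tn n" and f: "f \<in> Tn n"
  shows "(\<forall>M \<in> rho n a. card (ran n f \<inter> M) \<le> 1) \<longleftrightarrow> inj_on a (ran n f)"
proof
  assume h: "\<forall>M \<in> rho n a. card (ran n f \<inter> M) \<le> 1"
  show "inj_on a (ran n f)"
  proof (rule inj_onI)
    fix p q assume p: "p \<in> ran n f" and q: "q \<in> ran n f" and e: "a p = a q"
    obtain ip where ip: "ip \<in> {1..n}" "p = f ip" using p unfolding ran_def by blast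
    obtain iq where iq: "iq \<in> {1..n}" "q = f iq" using q unfolding ran_def by blast
    have pn: "p \<in> {1..n}" using ip Tn_val[OF f] by blast
    have qn: "q \<in> {1..n}" using iq Tn_val[OF f] by blast
    define M where "M = {j \<in> {1..n}. a j = a p}"
    have "M \<in> rho n a" unfolding rho_def M_def using pn by blast
    then have c: "card (ran n f \<inter> M) \<le> Suc 0" using h by simp
    have fin: "finite (ran n f \<inter> M)" unfolding M_def by (rule finite_subset[of _ "{1..n}"]) blast+
    have all: "\<forall>u\<in>ran n f \<inter> M. \<forall>v\<in>ran n f \<inter> M. u = v"
      using c card_le_Suc0_iff_eq[OF fin] by blast
    have "p \<in> ran n f \<inter> M" using p pn unfolding M_def by blast
    moreover have "q \<in> ran n f \<inter> M"
    proof -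
      have e2: "a q = a p" using e by (rule sym)
      have "q \<in> M" unfolding M_def by (rule CollectI, rule conjI[OF qn e2])
      then show ?thesis by (rule IntI[OF q])
    qed
    ultimately show "p = q" using all by blast
  qed
next
  assume h: "inj_on a (ran n f)"
  show "\<forall>M \<in> rho n a. card (ran n f \<inter> M) \<le> 1"
  proof
    fix M assume "M \<in> rho n a"
    then obtain i where M: "M = {j \<in> {1..n}. a j = a i}" unfolding rho_def by blast
    have fin: "finite (ran n f \<inter> M)" unfolding M by (rule finite_subset[of _ "{1..n}"]) blast+
    have "\<forall>p\<in>ran n f \<inter> M. \<forall>q\<in>ran n f \<inter> M. p = q"
    proof (intro ballI)
      fix p q assume p: "p \<in> ran n f \<inter> M" and q: "q \<in> ran n f \<inter> M"
      have "a p = a i" using p unfolding M by simp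
      moreover have "a q = a i" using q unfolding M by simp
      ultimately have "a p = a q" by simp
      then show "p = q" using h p q by (meson IntD1 inj_onD)
    qed
    then have "card (ran n f \<inter> M) \<le> Suc 0" using card_le_Suc0_iff_eq[OF fin] by blast
    then show "card (ran n f \<inter> M) \<le> 1" by simp
  qed
qed

lemma inj_kle: "inj_on a (ran n f) \<longleftrightarrow> kle n (\<lambda>i. a (f i)) f"
  unfolding inj_on_def kle_def ran_def by auto

lemma kern_lemma:
 "((\<forall>i\<in>I. \<forall>j\<in>I. a (y i) = a (y j) \<longrightarrow> x i = x j) \<and> (\<forall>i\<in>I. \<forall>j\<in>I. a (x i) = a (x j) \<longrightarrow> y i = y j)) \<longleftrightarrow>
  ((\<forall>i\<in>I. \<forall>j\<in>I. (y i = y j) = (x i = x j)) \<and> (\<forall>i\<in>I. \<forall>j\<in>I. a (y i) = a (y j) \<longrightarrow> y i = y j) \<and>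
   (\<forall>i\<in>I. \<forall>j\<in>I. a (x i) = a (x j) \<longrightarrow> x i = x j))" (is "?L \<longleftrightarrow> ?R")
proof
  assume h: ?L
  then have h1: "\<And>i j. i \<in> I \<Longrightarrow> j \<in> I \<Longrightarrow> a (y i) = a (y j) \<Longrightarrow> x i = x j"
    and h2: "\<And>i j. i \<in> I \<Longrightarrow> j \<in> I \<Longrightarrow> a (x i) = a (x j) \<Longrightarrow> y i = y j" by blast+
  show ?R
  proof (intro conjI ballI impI)
    fix i j assume "i \<in> I" "j \<in> I"
    then show "(y i = y j) = (x i = x j)" using h1 h2 by metis
  next
    fix i j assume "i \<in> I" "j \<in> I" "a (y i) = a (y j)"
    then show "y i = y j" using h1 h2 by metis
  next
    fix i j assume "i \<in> I" "j \<in> I" "a (x i) = a (x j)"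
    then show "x i = x j" using h1 h2 by metis
  qed
next
  assume ?R then show ?L by metis
qed

theorem theorem6:
  fixes n :: nat and a x :: "nat \<Rightarrow> nat"
  assumes "n > 1" and "a \<in> Tn n" and "x \<in> Tn n"
  shows "(rank n x \<le> rank n a \<and> (\<forall>M \<in> rho n a. card (ran n x \<inter> M) \<le> 1)
           \<longrightarrow> R_class n a x = {y \<in> Tn n. rho n y = rho n x \<and>
                                   (\<forall>M \<in> rho n a. card (ran n y \<inter> M) \<le> 1)}
               \<and> card (R_class n a x) > 1)
       \<and> (\<not> (rank n x \<le> rank n a \<and> (\<forall>M \<in> rho n a. card (ran n x \<inter> M) \<le> 1))
           \<longrightarrow> R_class n a x = {x})"
proof -
  note a = assms(2) and x = assms(3)
  have key: "y \<in> R_class n a x \<longleftrightarrow> y \<in> Tn n \<and> (y = x \<or> (rho n y = rho n x \<and> inj_on a (ran n y) \<and> inj_on a (ran n x)))" for y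
  proof -
    have "(kle n (\<lambda>i. a (y i)) x \<and> kle n (\<lambda>i. a (x i)) y) \<longleftrightarrow>
       (rho n y = rho n x \<and> inj_on a (ran n y) \<and> inj_on a (ran n x))"
      unfolding rho_eq inj_kle kle_def by (rule kern_lemma)
    then show ?thesis unfolding R_mem[OF a x] by blast
  qed
  have rk: "inj_on a (ran n x) \<Longrightarrow> rank n x \<le> rank n a"
  proof -
    assume "inj_on a (ran n x)"
    then have "rank n x = card (a ` ran n x)" unfolding rank_def by (simp add: card_image)
    also have "\<dots> \<le> card (a ` {1..n})"
    proof (rule card_mono)
      show "finite (a ` {1..n})" by simp
      show "a ` ran n x \<subseteq> a ` {1..n}" unfolding ran_def using Tn_val[OF x] by blast
    qed
    finally show ?thesis unfolding rank_def ran_def .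
  qed
  have bc: "(\<forall>M \<in> rho n a. card (ran n f \<inter> M) \<le> 1) \<longleftrightarrow> inj_on a (ran n f)" if "f \<in> Tn n" for f
    using block_cond[OF a that] .
  have setC: "{y \<in> Tn n. rho n y = rho n x \<and> (\<forall>M \<in> rho n a. card (ran n y \<inter> M) \<le> 1)}
      = {y \<in> Tn n. rho n y = rho n x \<and> inj_on a (ran n y)}"
  proof (rule set_eqI)
    fix y
    show "y \<in> {y \<in> Tn n. rho n y = rho n x \<and> (\<forall>M \<in> rho n a. card (ran n y \<inter> M) \<le> 1)} \<longleftrightarrow>
      y \<in> {y \<in> Tn n. rho n y = rho n x \<and> inj_on a (ran n y)}"
    proof (cases "y \<in> Tn n")
      case True then show ?thesis using bc[OF True] by simp
    next
      case False then show ?thesis by simp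
    qed
  qed
  show ?thesis
  proof (cases "inj_on a (ran n x)")
    case False
    have "R_class n a x = {x}"
    proof (rule set_eqI)
      fix y show "y \<in> R_class n a x \<longleftrightarrow> y \<in> {x}" using key[of y] False x by blast
    qed
    then show ?thesis using False bc[OF x] by simp
  next
    case True
    have R: "R_class n a x = {y \<in> Tn n. rho n y = rho n x \<and> inj_on a (ran n y)}"
    proof (rule set_eqI)
      fix y show "y \<in> R_class n a x \<longleftrightarrow> y \<in> {y \<in> Tn n. rho n y = rho n x \<and> inj_on a (ran n y)}"
        using key[of y] True x by blast
    qed
    have finT: "finite (Tn n)" unfolding Tn_def by (rule finite_PiE) simp_all
    have fin: "finite (R_class n a x)"
      by (rule finite_subset[OF _ finT]) (unfold R, blast)
    have one: "1 \<in> {1..n}" using assms(1) by simp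
    obtain y where yR: "y \<in> R_class n a x" and yx: "y \<noteq> x"
    proof (cases "\<forall>i\<in>{1..n}. x i = x 1")
      case True2: True
      define v where "v = (if x 1 = 1 then 2 else (1::nat))"
      define y where "y = restrict (\<lambda>_. v) {1..n}"
      have v: "v \<in> {1..n}" using assms(1) unfolding v_def by simp
      have yT: "y \<in> Tn n" unfolding y_def Tn_def using v by (simp add: restrict_PiE_iff)
      have "rho n y = rho n x" unfolding rho_eq
      proof (intro ballI)
        fix i j assume i: "i \<in> {1..n}" and j: "j \<in> {1..n}"
        have "x i = x 1" "x j = x 1" using True2 i j by blast+
        then have "x i = x j" by (rule trans[OF _ sym])
        moreover have "y i = y j" unfolding y_def using i j by simp
        ultimately show "(y i = y j) = (x i = x j)" by simp
      qed
      moreover have "inj_on a (ran n y)"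
      proof -
        have "ran n y \<subseteq> {v}" unfolding ran_def y_def by (rule image_subsetI) simp
        moreover have "inj_on a {v}" by simp
        ultimately show ?thesis using inj_on_subset by blast
      qed
      moreover have "y 1 \<noteq> x 1" using one unfolding y_def v_def by simp
      ultimately have "y \<in> R_class n a x" "y \<noteq> x" unfolding R using yT by auto
      then show ?thesis by (rule that)
    next
      case False2: False
      then obtain k where k: "k \<in> {1..n}" and xk: "x k \<noteq> x 1" by blast
      define u where "u = x 1"
      define g where "g = (\<lambda>t. if t = u then x k else if t = x k then u else t)"
      have ginj: "g s = g t \<longleftrightarrow> s = t" for s t unfolding g_def using xk u_def by auto
      define y where "y = restrict (\<lambda>i. g (x i)) {1..n}"
      have ux: "u \<in> ran n x" unfolding u_def ran_def using one by blast
      have kx: "x k \<in> ran n x" unfolding ran_def using k by blast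
      have gran: "g (x i) \<in> ran n x" if "i \<in> {1..n}" for i
      proof -
        have xi: "x i \<in> ran n x" unfolding ran_def using that by blast
        show ?thesis unfolding g_def using ux kx xi by simp
      qed
      have ranx: "ran n x \<subseteq> {1..n}" unfolding ran_def using Tn_val[OF x] by blast
      have yT: "y \<in> Tn n" unfolding y_def Tn_def
        by (rule iffD2[OF restrict_PiE_iff]) (use gran ranx in blast)
      have "rho n y = rho n x" unfolding rho_eq
      proof (intro ballI)
        fix i j assume i: "i \<in> {1..n}" and j: "j \<in> {1..n}"
        show "(y i = y j) = (x i = x j)" unfolding y_def using i j ginj by simp
      qed
      moreover have "ran n y \<subseteq> ran n x"
      proof
        fix t assume "t \<in> ran n y"
        then obtain i where i: "i \<in> {1..n}" "t = y i" unfolding ran_def by blast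
        then have "t = g (x i)" unfolding y_def by simp
        then show "t \<in> ran n x" using gran[OF i(1)] by simp
      qed
      then have "inj_on a (ran n y)" using True inj_on_subset by blast
      moreover have "y 1 \<noteq> x 1"
      proof -
        have "y 1 = x k" unfolding y_def g_def u_def using one by simp
        then show ?thesis using xk by simp
      qed
      ultimately have "y \<in> R_class n a x" "y \<noteq> x" unfolding R using yT by auto
      then show ?thesis by (rule that)
    qed
    have "x \<in> R_class n a x" using key[of x] x by blast
    then have "{x, y} \<subseteq> R_class n a x" using yR by blast
    then have "card {x, y} \<le> card (R_class n a x)" using fin by (rule card_mono[rotated])
    then have gt: "card (R_class n a x) > 1" using yx by simp
    show ?thesis using R setC True rk gt bc[OF x] by simp
  qed
qed

end
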